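(* For every finite set $P\subset\mathbb{R}^d$ of even cardinality, $$\max_{M}\sum_{\{u,v\}\in M}\|u-v\|\;\le\;\min_{c\in\mathbb{R}^d}\sum_{p\in P}\|c-p\|\;\le\;\sqrt2\,\max_{M}\sum_{\{u,v\}\in M}\|u-v\|,$$ where the maxima range over all matchings $M$ of the complete graph on $P$.
   Context: Norms are Euclidean. *)

theory Defs
  imports "HOL-Analysis.Analysis"
begin

definition complete_edges :: "'a set \<Rightarrow> 'a set set" where
  "complete_edges P = {e. \<exists>u v. e = {u, v} \<and> u \<noteq> v \<and> u \<in> P \<and> v \<in> P}"

definition is_matching :: "'a set \<Rightarrow> 'a set set \<Rightarrow> bool" where
  "is_matching P M \<longleftrightarrow> M \<subseteq> complete_edges P \<and>
     (\<forall>e\<in>M. \<forall>f\<in>M. e \<noteq> f \<longrightarrow> e \<inter> f = {})"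

definition edge_length :: "'a::real_normed_vector set \<Rightarrow> real" where
  "edge_length e = (THE l. \<exists>u v. e = {u, v} \<and> l = norm (u - v))"

definition matching_weight :: "'a::real_normed_vector set set \<Rightarrow> real" where
  "matching_weight M = (\<Sum>e\<in>M. edge_length e)"

definition max_matching :: "'a::real_normed_vector set \<Rightarrow> real" where
  "max_matching P = Max (matching_weight ` {M. is_matching P M})"

end

theory Submission
  imports Defs
begin

definition invo :: "'a::zero set \<Rightarrow> ('a \<Rightarrow> 'a) \<Rightarrow> bool" where
  "invo P s \<longleftrightarrow> (\<forall>p\<in>P. s p \<in> P \<and> s p \<noteq> p \<and> s (s p) = p) \<and> (\<forall>x. x \<notin> P \<longrightarrow> s x = 0)"

lemma invo_exists:
  fixes P :: "'a::zero set"
  shows "finite P \<Longrightarrow> even (card P) \<Longrightarrow> \<exists>s. invo P s"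
proof (induction "card P" arbitrary: P rule: less_induct)
  case less
  show ?case
  proof (cases "P = {}")
    case True
    then show ?thesis by (rule_tac x="\<lambda>_. 0" in exI) (simp add: invo_def)
  next
    case False
    then obtain a where a: "a \<in> P" by blast
    have "card (P - {a}) = card P - 1" using a less.prems by simp
    moreover have "card P \<ge> 1" using False less.prems by (simp add: Suc_leI card_gt_0_iff)
    ultimately have "odd (card (P - {a}))" using less.prems(2)
      by (metis One_nat_def Suc_diff_le diff_Suc_1 even_Suc le_add_diff_inverse plus_1_eq_Suc)
    then have "P - {a} \<noteq> {}" by (metis card.empty even_zero)
    then obtain b where b: "b \<in> P" "b \<noteq> a" by blast
    define Q where "Q = P - {a, b}"
    have cQ: "card Q = card P - 2" using a b less.prems unfolding Q_def
      by (simp add: card_Diff_subset)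
    have lt: "card Q < card P" using cQ \<open>card P \<ge> 1\<close> by simp
    have "card {a, b} \<le> card P" using a b less.prems by (intro card_mono) auto
    then have "card P \<ge> 2" using b by simp
    then have "even (card Q)" using cQ less.prems(2) by simp
    moreover have "finite Q" using less.prems unfolding Q_def by simp
    ultimately obtain s where s: "invo Q s" using less.hyps[OF lt] by blast
    define t where "t = s(a := b, b := a)"
    have "invo P t" using s a b unfolding invo_def t_def Q_def by auto
    then show ?thesis by blast
  qed
qed

lemma invo_finite:
  fixes P :: "'a::zero set"
  assumes "finite P" shows "finite {s. invo P s}"
proof -
  have "{s. invo P s} \<subseteq> {f. \<forall>x. (x \<in> P \<longrightarrow> f x \<in> P) \<and> (x \<notin> P \<longrightarrow> f x = 0)}"
    by (auto simp: invo_def)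
  then show ?thesis using finite_set_of_finite_funs[OF assms assms] finite_subset by blast
qed

lemma invo_bij: "invo P s \<Longrightarrow> bij_betw s P P"
  by (rule bij_betw_byWitness[where f'=s]) (auto simp: invo_def)

lemma invo_reindex: "invo P s \<Longrightarrow> (\<Sum>p\<in>P. g (s p)) = (\<Sum>p\<in>P. g p)"
  using sum.reindex_bij_betw[OF invo_bij] by blast

definition obj :: "'a::real_normed_vector set \<Rightarrow> ('a \<Rightarrow> 'a) \<Rightarrow> real" where
  "obj P s = (\<Sum>p\<in>P. (norm (p - s p))\<^sup>2)"

lemma obj_change:
  assumes "finite P" "A \<subseteq> P" "\<forall>x\<in>P - A. s x = t x"
  shows "obj P t - obj P s = (\<Sum>p\<in>A. (norm (p - t p))\<^sup>2) - (\<Sum>p\<in>A. (norm (p - s p))\<^sup>2)"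
proof -
  have "obj P t = (\<Sum>p\<in>A. (norm (p - t p))\<^sup>2) + (\<Sum>p\<in>P - A. (norm (p - t p))\<^sup>2)"
    unfolding obj_def using sum.subset_diff[OF assms(2,1), of "\<lambda>p. (norm (p - t p))\<^sup>2"] by linarith
  moreover have "obj P s = (\<Sum>p\<in>A. (norm (p - s p))\<^sup>2) + (\<Sum>p\<in>P - A. (norm (p - s p))\<^sup>2)"
    unfolding obj_def using sum.subset_diff[OF assms(2,1), of "\<lambda>p. (norm (p - s p))\<^sup>2"] by linarith
  moreover have "(\<Sum>p\<in>P - A. (norm (p - t p))\<^sup>2) = (\<Sum>p\<in>P - A. (norm (p - s p))\<^sup>2)"
    using assms(3) by (intro sum.cong) auto
  ultimately show ?thesis by simp
qed

lemma sum4: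
  fixes f :: "'a \<Rightarrow> real"
  assumes "a \<noteq> b" "a \<noteq> c" "a \<noteq> d" "b \<noteq> c" "b \<noteq> d" "c \<noteq> d"
  shows "(\<Sum>p\<in>{a,b,c,d}. f p) = f a + f b + f c + f d"
  using assms by simp

lemma swap_ineq:
  fixes P :: "'a::real_inner set"
  assumes fin: "finite P" and s: "invo P s" and mx: "\<And>t. invo P t \<Longrightarrow> obj P t \<le> obj P s"
    and a: "a \<in> P" and c: "c \<in> P" "c \<noteq> a" "c \<noteq> s a"
  shows "inner a (s a) + inner c (s c) \<le> inner a c + inner (s a) (s c)"
proof -
  define b where "b = s a"
  define d where "d = s c"
  have bP: "b \<in> P" "b \<noteq> a" "s b = a" using s a unfolding invo_def b_def by auto
  have dP: "d \<in> P" "d \<noteq> c" "s d = c" using s c unfolding invo_def d_def by auto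
  have cb: "c \<noteq> b" using c b_def by simp
  have ad: "a \<noteq> d" using c dP b_def by metis
  have bd: "b \<noteq> d" using bP dP c by metis
  define t where "t = s(a := c, c := a, b := d, d := b)"
  have tv: "t a = c" "t b = d" "t c = a" "t d = b" "\<And>x. x \<notin> {a,b,c,d} \<Longrightarrow> t x = s x"
    using c cb ad bd bP dP unfolding t_def by auto
  have sP: "\<forall>p\<in>P. s p \<in> P \<and> s p \<noteq> p \<and> s (s p) = p" "\<forall>x. x \<notin> P \<longrightarrow> s x = 0"
    using s unfolding invo_def by auto
  have "invo P t"
    unfolding invo_def
  proof (rule conjI)
    show "\<forall>x. x \<notin> P \<longrightarrow> t x = 0"
    proof (intro allI impI)
      fix x assume "x \<notin> P"
      then have "x \<notin> {a,b,c,d}" using a c bP dP by auto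
      then show "t x = 0" using tv(5) sP(2) \<open>x \<notin> P\<close> by simp
    qed
  next
   show "\<forall>p\<in>P. t p \<in> P \<and> t p \<noteq> p \<and> t (t p) = p"
   proof
    fix p assume p: "p \<in> P"
    show "t p \<in> P \<and> t p \<noteq> p \<and> t (t p) = p"
    proof (cases "p \<in> {a,b,c,d}")
      case True
      then have "p = a \<or> p = b \<or> p = c \<or> p = d" by simp
      then show ?thesis
        using tv(1-4) a c bP dP cb ad bd by (elim disjE) (simp_all add: eq_commute)
    next
      case False
      have ssp: "s (s p) = p" and spP: "s p \<in> P" using sP(1) p by blast+
      have "s p \<noteq> a"
      proof
        assume "s p = a" then have "p = b" using ssp b_def by simp
        then show False using False by simp
      qed
      moreover have "s p \<noteq> b"
      proof
        assume "s p = b" then have "p = a" using ssp bP(3) by simp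
        then show False using False by simp
      qed
      moreover have "s p \<noteq> c"
      proof
        assume "s p = c" then have "p = d" using ssp d_def by simp
        then show False using False by simp
      qed
      moreover have "s p \<noteq> d"
      proof
        assume "s p = d" then have "p = c" using ssp dP(3) by simp
        then show False using False by simp
      qed
      ultimately have "t (s p) = s (s p)" using tv(5) by simp
      moreover have "t p = s p" using tv(5)[OF False] .
      ultimately show ?thesis using ssp spP sP(1) p by simp
    qed
   qed
  qed
  then have le: "obj P t \<le> obj P s" by (rule mx)
  have A: "{a, b, c, d} \<subseteq> P" using a c bP dP by auto
  have agree: "\<forall>x\<in>P - {a, b, c, d}. s x = t x" unfolding t_def by auto
  have "obj P t - obj P s = (\<Sum>p\<in>{a,b,c,d}. (norm (p - t p))\<^sup>2) - (\<Sum>p\<in>{a,b,c,d}. (norm (p - s p))\<^sup>2)"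
    by (rule obj_change[OF fin A agree])
  also have "\<dots> = ((norm (a - c))\<^sup>2 + (norm (b - d))\<^sup>2 + (norm (c - a))\<^sup>2 + (norm (d - b))\<^sup>2)
     - ((norm (a - b))\<^sup>2 + (norm (b - a))\<^sup>2 + (norm (c - d))\<^sup>2 + (norm (d - c))\<^sup>2)"
    using sum4[of a b c d "\<lambda>p. (norm (p - t p))\<^sup>2"] sum4[of a b c d "\<lambda>p. (norm (p - s p))\<^sup>2"]
      c cb ad bd bP dP tv(1-4) b_def d_def by simp
  finally have "(norm (a - c))\<^sup>2 + (norm (b - d))\<^sup>2 \<le> (norm (a - b))\<^sup>2 + (norm (c - d))\<^sup>2"
    using le by (simp add: norm_minus_commute)
  then show ?thesis unfolding b_def[symmetric] d_def[symmetric]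
    by (simp add: power2_norm_eq_inner inner_diff_left inner_diff_right inner_commute algebra_simps)
qed

lemma invo_facts:
  assumes "invo P s" "p \<in> P"
  shows "s p \<in> P" "s p \<noteq> p" "s (s p) = p"
  using assms unfolding invo_def by auto

lemma sq_id: "inner (p + q) (p + q) - 4 * inner p q = inner (p - q) (p - (q::'a::real_inner))"
  by (simp add: inner_add_left inner_add_right inner_diff_left inner_diff_right inner_commute)

lemma key_pair:
  fixes P :: "'a::real_inner set"
  assumes fin: "finite P" and s: "invo P s" and mx: "\<And>t. invo P t \<Longrightarrow> obj P t \<le> obj P s"
    and p: "p \<in> P" and q: "q \<in> P"
  shows "2 * (inner p (s p) + inner q (s q)) \<le> inner (p + s p) (q + s q)"
proof -
  have i0: "0 \<le> inner (p - s p) (p - s p)" by simp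
  consider "q = p" | "q = s p" | "q \<noteq> p" "q \<noteq> s p" by blast
  then show ?thesis
  proof cases
    case 1
    have "2 * (inner p (s p) + inner p (s p)) \<le> inner (p + s p) (p + s p)"
      using i0 sq_id[of p "s p"] by (smt (verit))
    then show ?thesis using 1 by simp
  next
    case 2
    then have "s q = p" using invo_facts[OF s p] by simp
    have "2 * (inner p (s p) + inner p (s p)) \<le> inner (p + s p) (p + s p)"
      using i0 sq_id[of p "s p"] by (smt (verit))
    then show ?thesis using 2 \<open>s q = p\<close> by (simp add: inner_commute add.commute)
  next
    case 3
    have h1: "inner p (s p) + inner q (s q) \<le> inner p q + inner (s p) (s q)"
      by (rule swap_ineq[OF fin s mx p q 3])
    have sq: "s q \<in> P" "s (s q) = q" using invo_facts[OF s q] by auto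
    have n1: "s q \<noteq> p" using 3 sq by auto
    have n2: "s q \<noteq> s p" using 3 sq invo_facts[OF s p] by metis
    have h2: "inner p (s p) + inner (s q) (s (s q)) \<le> inner p (s q) + inner (s p) (s (s q))"
      by (rule swap_ineq[OF fin s mx p sq(1) n1 n2])
    have e: "inner (p + s p) (q + s q) = inner p q + inner (s p) (s q) + inner p (s q) + inner (s p) q"
      by (simp add: inner_add_left inner_add_right)
    show ?thesis using h1 h2 sq(2) e by (simp add: inner_commute)
  qed
qed

lemma amgm_point:
  fixes u d :: real
  assumes "0 \<le> u" "0 < d"
  shows "u \<le> d / (2 * sqrt 2) + sqrt 2 / 2 * (u\<^sup>2 / d)"
proof -
  define r where "r = sqrt 2"
  have r2: "r * r = 2" and rp: "r > 0" unfolding r_def by auto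
  have "0 \<le> (d - r * u)\<^sup>2" by simp
  moreover have "(d - r * u)\<^sup>2 = d * d + r * r * u * u - 2 * r * d * u"
    by (simp add: power2_eq_square algebra_simps)
  ultimately have "2 * r * d * u \<le> d * d + r * r * u * u" by linarith
  moreover have "d / (2 * r) + r / 2 * (u\<^sup>2 / d) = (d * d + r * r * u * u) / (2 * r * d)"
    using rp assms(2) by (simp add: field_simps power2_eq_square)
  moreover have "u = (2 * r * d * u) / (2 * r * d)" using rp assms(2) by simp
  ultimately have "u \<le> d / (2 * r) + r / 2 * (u\<^sup>2 / d)"
    using rp assms(2) by (metis divide_right_mono mult_pos_pos zero_less_numeral less_eq_real_def)
  then show ?thesis unfolding r_def .
qed

lemma upper_bound:
  fixes P :: "'a::real_inner set"
  assumes fin: "finite P" and ne: "P \<noteq> {}" and s: "invo P s"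
    and mx: "\<And>t. invo P t \<Longrightarrow> obj P t \<le> obj P s"
  shows "\<exists>x. (\<Sum>p\<in>P. norm (x - p)) \<le> sqrt 2 * ((\<Sum>p\<in>P. norm (p - s p)) / 2)"
proof -
  define d where "d p = norm (p - s p)" for p
  define w where "w p = 1 / d p" for p
  define S where "S = (\<Sum>p\<in>P. w p)"
  define y where "y = (\<Sum>p\<in>P. w p *\<^sub>R p)"
  define x where "x = (1 / S) *\<^sub>R y"
  define cc where "cc p = inner p (s p)" for p
  have dpos: "d p > 0" if "p \<in> P" for p
    using invo_facts[OF s that] unfolding d_def by simp
  have dsym: "d (s p) = d p" if "p \<in> P" for p
    using invo_facts[OF s that] unfolding d_def by (simp add: norm_minus_commute)
  have wpos: "w p > 0" if "p \<in> P" for p using dpos[OF that] unfolding w_def by simp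
  have wsym: "w (s p) = w p" if "p \<in> P" for p using dsym[OF that] unfolding w_def by simp
  have Spos: "S > 0" unfolding S_def using wpos fin ne by (intro sum_pos) auto
  have ys: "(\<Sum>p\<in>P. w p *\<^sub>R s p) = y"
  proof -
    have "(\<Sum>p\<in>P. w p *\<^sub>R s p) = (\<Sum>p\<in>P. w (s p) *\<^sub>R s p)"
      using wsym by (intro sum.cong) auto
    also have "\<dots> = y" unfolding y_def by (rule invo_reindex[OF s])
    finally show ?thesis .
  qed
  have y2: "(\<Sum>p\<in>P. w p *\<^sub>R (p + s p)) = 2 *\<^sub>R y"
    using ys unfolding y_def by (simp add: scaleR_add_right sum.distrib scaleR_2)
  have claim1: "S * (\<Sum>p\<in>P. w p * cc p) \<le> inner y y"
  proof -
    have "inner (2 *\<^sub>R y) (2 *\<^sub>R y) = (\<Sum>p\<in>P. \<Sum>q\<in>P. w p * (w q * inner (q + s q) (p + s p)))"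
      unfolding y2[symmetric] by (simp add: inner_sum_left inner_sum_right sum_distrib_left mult.assoc)
    also have "\<dots> \<ge> (\<Sum>p\<in>P. \<Sum>q\<in>P. w p * w q * (2 * (cc p + cc q)))"
    proof (intro sum_mono)
      fix p q assume "p \<in> P" "q \<in> P"
      have "w p * w q * (2 * (cc p + cc q)) \<le> w p * w q * inner (q + s q) (p + s p)"
        using key_pair[OF fin s mx \<open>q \<in> P\<close> \<open>p \<in> P\<close>] wpos \<open>p \<in> P\<close> \<open>q \<in> P\<close> unfolding cc_def
        by (intro mult_left_mono) (auto simp: add.commute intro: less_imp_le)
      then show "w p * w q * (2 * (cc p + cc q)) \<le> w p * (w q * inner (q + s q) (p + s p))"
        by (simp add: mult.assoc)
    qed
    also have "(\<Sum>p\<in>P. \<Sum>q\<in>P. w p * w q * (2 * (cc p + cc q)))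
        = 2 * ((\<Sum>p\<in>P. w p * cc p) * S) + 2 * (S * (\<Sum>q\<in>P. w q * cc q))"
      unfolding S_def sum_product
      by (simp add: algebra_simps sum.distrib sum_distrib_left)
    finally have "4 * (S * (\<Sum>p\<in>P. w p * cc p)) \<le> inner (2 *\<^sub>R y) (2 *\<^sub>R y)"
      by (simp add: algebra_simps)
    then show ?thesis by simp
  qed
  have claim2: "(\<Sum>p\<in>P. w p * (norm (x - p))\<^sup>2) \<le> (\<Sum>p\<in>P. d p) / 2"
  proof -
    have yx: "y = S *\<^sub>R x" unfolding x_def using Spos by simp
    have "(\<Sum>p\<in>P. w p * (norm (x - p))\<^sup>2)
        = (\<Sum>p\<in>P. w p * inner x x - 2 * inner x (w p *\<^sub>R p) + w p * inner p p)"
      by (intro sum.cong) (auto simp: power2_norm_eq_inner inner_diff_left inner_diff_right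
          inner_commute algebra_simps)
    also have "\<dots> = S * inner x x - 2 * inner x y + (\<Sum>p\<in>P. w p * inner p p)"
      unfolding S_def y_def
      by (simp add: sum.distrib sum_subtractf sum_distrib_right inner_sum_right sum_distrib_left)
    also have "\<dots> = (\<Sum>p\<in>P. w p * inner p p) - inner y y / S"
      unfolding yx using Spos by (simp add: power2_eq_square field_simps)
    finally have e1: "(\<Sum>p\<in>P. w p * (norm (x - p))\<^sup>2) = (\<Sum>p\<in>P. w p * inner p p) - inner y y / S" .
    have e2: "(\<Sum>p\<in>P. w p * inner (s p) (s p)) = (\<Sum>p\<in>P. w p * inner p p)"
    proof -
      have "(\<Sum>p\<in>P. w p * inner (s p) (s p)) = (\<Sum>p\<in>P. w (s p) * inner (s p) (s p))"
        using wsym by (intro sum.cong) auto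
      also have "\<dots> = (\<Sum>p\<in>P. w p * inner p p)" by (rule invo_reindex[OF s])
      finally show ?thesis .
    qed
    have e3: "w p * inner p p + w p * inner (s p) (s p) = 2 * (w p * cc p) + d p" if "p \<in> P" for p
    proof -
      have "inner p p + inner (s p) (s p) = 2 * cc p + (d p)\<^sup>2"
        unfolding cc_def d_def by (simp add: power2_norm_eq_inner inner_diff_left inner_diff_right inner_commute)
      moreover have "w p * (d p)\<^sup>2 = d p" using dpos[OF that] unfolding w_def by (simp add: power2_eq_square)
      ultimately have "w p * (inner p p + inner (s p) (s p)) = w p * (2 * cc p) + d p"
        by (simp add: distrib_left)
      then show ?thesis by (simp add: distrib_left mult.left_commute)
    qed
    have "2 * (\<Sum>p\<in>P. w p * inner p p) = 2 * (\<Sum>p\<in>P. w p * cc p) + (\<Sum>p\<in>P. d p)"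
    proof -
      have "2 * (\<Sum>p\<in>P. w p * inner p p) = (\<Sum>p\<in>P. w p * inner p p + w p * inner (s p) (s p))"
        using e2 by (simp add: sum.distrib)
      also have "\<dots> = (\<Sum>p\<in>P. 2 * (w p * cc p) + d p)" using e3 by (intro sum.cong) auto
      also have "\<dots> = 2 * (\<Sum>p\<in>P. w p * cc p) + (\<Sum>p\<in>P. d p)"
        by (simp add: sum.distrib sum_distrib_left)
      finally show ?thesis .
    qed
    moreover have "(\<Sum>p\<in>P. w p * cc p) \<le> inner y y / S"
      using claim1 Spos by (simp add: field_simps mult.commute)
    ultimately show ?thesis using e1 by linarith
  qed
  have "(\<Sum>p\<in>P. norm (x - p)) \<le> (\<Sum>p\<in>P. d p / (2 * sqrt 2) + sqrt 2 / 2 * (w p * (norm (x - p))\<^sup>2))"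
  proof (rule sum_mono)
    fix p assume "p \<in> P"
    show "norm (x - p) \<le> d p / (2 * sqrt 2) + sqrt 2 / 2 * (w p * (norm (x - p))\<^sup>2)"
      using amgm_point[OF norm_ge_zero dpos[OF \<open>p \<in> P\<close>], of "x - p"] unfolding w_def by simp
  qed
  also have "\<dots> = (\<Sum>p\<in>P. d p) / (2 * sqrt 2) + sqrt 2 / 2 * (\<Sum>p\<in>P. w p * (norm (x - p))\<^sup>2)"
    by (simp add: sum.distrib sum_distrib_left sum_divide_distrib)
  also have "\<dots> \<le> (\<Sum>p\<in>P. d p) / (2 * sqrt 2) + sqrt 2 / 2 * ((\<Sum>p\<in>P. d p) / 2)"
    using claim2 by (intro add_left_mono mult_left_mono) auto
  also have "\<dots> = sqrt 2 * ((\<Sum>p\<in>P. d p) / 2)"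
  proof -
    have r: "sqrt 2 * sqrt 2 = (2::real)" by simp
    have "(1::real) / (2 * sqrt 2) = sqrt 2 / 4"
      using r by (simp add: field_simps)
    then show ?thesis by (simp add: field_simps)
  qed
  finally show ?thesis unfolding d_def by blast
qed

lemma edge_length_pair: "edge_length {u, v} = norm (u - v)"
  unfolding edge_length_def
proof (rule the_equality)
  show "\<exists>u' v'. {u, v} = {u', v'} \<and> norm (u - v) = norm (u' - v')" by blast
next
  fix l assume "\<exists>u' v'. {u, v} = {u', v'} \<and> l = norm (u' - v')"
  then obtain u' v' where "{u, v} = {u', v'}" "l = norm (u' - v')" by blast
  then show "l = norm (u - v)" by (auto simp: doubleton_eq_iff norm_minus_commute)
qed

lemma matchings_finite: "finite P \<Longrightarrow> finite {M. is_matching P M}"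
proof -
  assume "finite P"
  have "{M. is_matching P M} \<subseteq> Pow (Pow P)"
    by (auto simp: is_matching_def complete_edges_def)
  then show ?thesis using \<open>finite P\<close> by (meson finite_Pow_iff finite_subset)
qed

lemma matching_le_cost:
  fixes c :: "'a::real_normed_vector"
  assumes "finite P" "is_matching P M"
  shows "matching_weight M \<le> (\<Sum>p\<in>P. norm (c - p))"
proof -
  have MP: "M \<subseteq> complete_edges P" and dj: "\<forall>e\<in>M. \<forall>f\<in>M. e \<noteq> f \<longrightarrow> e \<inter> f = {}"
    using assms(2) by (auto simp: is_matching_def)
  have fin: "\<forall>e\<in>M. finite e" using MP by (auto simp: complete_edges_def)
  have UP: "\<Union>M \<subseteq> P" using MP by (auto simp: complete_edges_def)
  have "matching_weight M = (\<Sum>e\<in>M. edge_length e)" by (simp add: matching_weight_def)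
  also have "\<dots> \<le> (\<Sum>e\<in>M. (\<Sum>p\<in>e. norm (c - p)))"
  proof (rule sum_mono)
    fix e assume "e \<in> M"
    then obtain u v where e: "e = {u, v}" "u \<noteq> v" using MP by (auto simp: complete_edges_def)
    have "norm (u - v) \<le> norm (c - u) + norm (c - v)"
      using norm_triangle_ineq4[of "c - v" "c - u"] by (simp add: add.commute)
    then show "edge_length e \<le> (\<Sum>p\<in>e. norm (c - p))" using e by (simp add: edge_length_pair)
  qed
  also have "\<dots> = (\<Sum>p\<in>\<Union>M. norm (c - p))"
    using sum.Union_disjoint[OF fin dj, of "\<lambda>p. norm (c - p)"] by simp
  also have "\<dots> \<le> (\<Sum>p\<in>P. norm (c - p))"
    by (rule sum_mono2[OF assms(1) UP]) auto
  finally show ?thesis .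
qed

lemma max_matching_le:
  fixes P :: "'a::real_normed_vector set"
  assumes "finite P" "\<And>M. is_matching P M \<Longrightarrow> matching_weight M \<le> C"
  shows "max_matching P \<le> C"
proof -
  have "is_matching P {}" by (simp add: is_matching_def)
  then show ?thesis unfolding max_matching_def using assms matchings_finite[OF assms(1)]
    by (subst Max_le_iff) auto
qed

lemma max_matching_ge:
  fixes P :: "'a::real_normed_vector set"
  assumes "finite P" "is_matching P M"
  shows "matching_weight M \<le> max_matching P"
  unfolding max_matching_def using assms matchings_finite[OF assms(1)]
  by (intro Max_ge) auto


lemma invo_matching:
  fixes P :: "'a::real_normed_vector set"
  assumes fin: "finite P" and s: "invo P s"
  shows "is_matching P ((\<lambda>p. {p, s p}) ` P)"
    and "matching_weight ((\<lambda>p. {p, s p}) ` P) = (\<Sum>p\<in>P. norm (p - s p)) / 2"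
proof -
  define M where "M = (\<lambda>p. {p, s p}) ` P"
  have dj: "\<forall>e\<in>M. \<forall>f\<in>M. e \<noteq> f \<longrightarrow> e \<inter> f = {}"
  proof (intro ballI impI)
    fix e f assume "e \<in> M" "f \<in> M" "e \<noteq> f"
    then obtain p q where pq: "p \<in> P" "q \<in> P" "e = {p, s p}" "f = {q, s q}" unfolding M_def by auto
    have fp: "s (s p) = p" "s (s q) = q" using invo_facts[OF s pq(1)] invo_facts[OF s pq(2)] by auto
    show "e \<inter> f = {}"
    proof (rule ccontr)
      assume "e \<inter> f \<noteq> {}"
      then have "p = q \<or> p = s q \<or> s p = q \<or> s p = s q" using pq by auto
      then have "q = p \<or> q = s p" using fp by metis
      then have "e = f"
      proof
        assume "q = p" then show "e = f" using pq by simp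
      next
        assume "q = s p" then show "e = f" using pq fp by (simp add: insert_commute)
      qed
      then show False using \<open>e \<noteq> f\<close> by simp
    qed
  qed
  show "is_matching P ((\<lambda>p. {p, s p}) ` P)"
    unfolding is_matching_def M_def[symmetric]
  proof (intro conjI dj)
    show "M \<subseteq> complete_edges P"
      unfolding M_def complete_edges_def using invo_facts[OF s] by blast
  qed
  have fine: "\<forall>e\<in>M. finite e" unfolding M_def by auto
  have UM: "\<Union>M = P" unfolding M_def using invo_facts[OF s] by blast
  have "(\<Sum>p\<in>P. norm (p - s p)) = (\<Sum>e\<in>M. \<Sum>p\<in>e. norm (p - s p))"
    using sum.Union_disjoint[OF fine dj, of "\<lambda>p. norm (p - s p)"] UM by simp
  also have "\<dots> = (\<Sum>e\<in>M. 2 * edge_length e)"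
  proof (rule sum.cong)
    fix e assume "e \<in> M"
    then obtain p where p: "p \<in> P" "e = {p, s p}" unfolding M_def by auto
    have "s p \<noteq> p" "s (s p) = p" using invo_facts[OF s p(1)] by auto
    then show "(\<Sum>p\<in>e. norm (p - s p)) = 2 * edge_length e"
      using p by (simp add: edge_length_pair norm_minus_commute)
  qed simp
  finally have h: "(\<Sum>p\<in>P. norm (p - s p)) = (\<Sum>e\<in>M. 2 * edge_length e)" .
  have "(\<Sum>e\<in>M. 2 * edge_length e) = 2 * matching_weight M"
    unfolding matching_weight_def by (simp add: sum_distrib_left)
  then show "matching_weight ((\<lambda>p. {p, s p}) ` P) = (\<Sum>p\<in>P. norm (p - s p)) / 2"
    unfolding M_def[symmetric] using h by simp
qed

lemma median_exists:
  fixes P :: "'a::euclidean_space set"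
  assumes fin: "finite P"
  shows "\<exists>c. \<forall>c'. (\<Sum>p\<in>P. norm (c - p)) \<le> (\<Sum>p\<in>P. norm (c' - p))"
proof (cases "P = {}")
  case True then show ?thesis by simp
next
  case False
  then obtain a where a: "a \<in> P" by blast
  define f where "f c = (\<Sum>p\<in>P. norm (c - p))" for c :: 'a
  define R where "R = norm a + f 0"
  have R0: "R \<ge> 0" unfolding R_def f_def by (simp add: sum_nonneg)
  have "continuous_on (cball 0 R) f" unfolding f_def
    by (intro continuous_intros)
  then obtain c where c: "c \<in> cball 0 R" "\<forall>y\<in>cball 0 R. f c \<le> f y"
    using continuous_attains_inf[of "cball 0 R" f] R0 by auto
  have "f c \<le> f y" for y
  proof (cases "y \<in> cball 0 R")
    case True then show ?thesis using c by auto
  next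
    case False
    then have "norm y > R" by simp
    have "norm (y - a) \<le> f y" unfolding f_def
      using member_le_sum[of a P "\<lambda>p. norm (y - p)"] a fin by simp
    moreover have "norm y - norm a \<le> norm (y - a)" by (rule norm_triangle_ineq2)
    moreover have "f c \<le> f 0" using c R0 by simp
    ultimately show ?thesis using \<open>norm y > R\<close> unfolding R_def by linarith
  qed
  then show ?thesis unfolding f_def by blast
qed

theorem mainTheorem7:
  fixes P :: "'a::euclidean_space set"
  assumes "finite P" and "even (card P)"
  shows "\<exists>c. (\<forall>c'. (\<Sum>p\<in>P. norm (c - p)) \<le> (\<Sum>p\<in>P. norm (c' - p)))
           \<and> max_matching P \<le> (\<Sum>p\<in>P. norm (c - p))
           \<and> (\<Sum>p\<in>P. norm (c - p)) \<le> sqrt 2 * max_matching P"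
proof -
  obtain c where c: "\<forall>c'. (\<Sum>p\<in>P. norm (c - p)) \<le> (\<Sum>p\<in>P. norm (c' - p))"
    using median_exists[OF assms(1)] by blast
  have low: "max_matching P \<le> (\<Sum>p\<in>P. norm (c - p))"
    by (rule max_matching_le[OF assms(1)]) (rule matching_le_cost[OF assms(1)])
  have mm0: "0 \<le> max_matching P"
    using max_matching_ge[OF assms(1), of "{}"] by (simp add: is_matching_def matching_weight_def)
  have up: "\<exists>x. (\<Sum>p\<in>P. norm (x - p)) \<le> sqrt 2 * max_matching P"
  proof (cases "P = {}")
    case True then show ?thesis using mm0 by simp
  next
    case False
    define I where "I = {s. invo P s}"
    have Ifin: "finite I" unfolding I_def by (rule invo_finite[OF assms(1)])
    have Ine: "I \<noteq> {}" unfolding I_def using invo_exists[OF assms] by blast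
    define m where "m = Max (obj P ` I)"
    have "m \<in> obj P ` I" unfolding m_def using Ifin Ine by (intro Max_in) auto
    then obtain s where sI: "s \<in> I" "obj P s = m" by blast
    have mx: "obj P t \<le> obj P s" if "invo P t" for t
    proof -
      have "obj P t \<in> obj P ` I" using that unfolding I_def by blast
      then show ?thesis using sI(2) Ifin unfolding m_def by (simp add: Max_ge)
    qed
    have s: "invo P s" using sI unfolding I_def by simp
    obtain x where x: "(\<Sum>p\<in>P. norm (x - p)) \<le> sqrt 2 * ((\<Sum>p\<in>P. norm (p - s p)) / 2)"
      using upper_bound[OF assms(1) False s mx] by blast
    have "(\<Sum>p\<in>P. norm (p - s p)) / 2 \<le> max_matching P"
      using max_matching_ge[OF assms(1) invo_matching(1)[OF assms(1) s]]
        invo_matching(2)[OF assms(1) s] by simp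
    then have "sqrt 2 * ((\<Sum>p\<in>P. norm (p - s p)) / 2) \<le> sqrt 2 * max_matching P"
      by (intro mult_left_mono) auto
    then show ?thesis using x by (meson order_trans)
  qed
  then obtain x where "(\<Sum>p\<in>P. norm (x - p)) \<le> sqrt 2 * max_matching P" by blast
  then have "(\<Sum>p\<in>P. norm (c - p)) \<le> sqrt 2 * max_matching P" using c by (meson order_trans)
  then show ?thesis using c low by blast
qed

end
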